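(* With the notation below, the homomorphisms $\deg$ and $\chi$ vanish on the subgroup $\mathcal P$ of principal divisors, and the induced map $(\deg,\chi):\mathrm{Div}(C_p)/\mathcal P\to\mathbb{R}\times(\mathbb{Z}/(p-1)\mathbb{Z})$ is an isomorphism of abelian groups.
   Context: Let $p$ be a prime and $H_p=\mathbb{Z}[1/p]\subset\mathbb{Q}$; $\chi:H_p\to\mathbb{Z}/(p-1)\mathbb{Z}$, $\chi(a/p^n)=a\bmod(p-1)$. $C_p$ is the set of subgroups $H=\lambda H_p\subset\mathbb{R}$, $\lambda>0$. For $H=\lambda H_p$ define $\chi_H:H\to\mathbb{Z}/(p-1)\mathbb{Z}$ by $\chi_H(x)=\chi(\lambda^{-1}x)$ (independent of $\lambda$). $\mathcal K(C_p)$: continuous piecewise affine functions $f:(0,\infty)\to\mathbb{R}$ with slopes in $H_p$ and $f(p\lambda)=f(\lambda)$ (plus the constant $-\infty$). For real-valued $f$ and $H=\lambda H_p$, $\mathrm{Ord}_H(f)=h_+-h_-$ with $h_\pm=\lim_{\epsilon\to0\pm}(f((1+\epsilon)\lambda)-f(\lambda))/\epsilon\in H$. A divisor $D$ on $C_p$ assigns $D(H)\in H$ to each $H\in C_p$, zero for all but finitely many $H$; $\mathrm{Div}(C_p)$ is the group of divisors under pointwise addition. $\deg(D)=\sum_H D(H)\in\mathbb{R}$, $\chi(D)=\sum_H\chi_H(D(H))$. The principal divisor of real-valued $f\in\mathcal K(C_p)$ is $(f)(H)=\mathrm{Ord}_H(f)$; $\mathcal P$ is the subgroup of principal divisors. 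*)

theory Defs
  imports Complex_Main "HOL-Computational_Algebra.Primes"
begin

definition Hp :: "nat \<Rightarrow> real set" where
  "Hp p = {of_int a / real p ^ n | a n. True}"

text \<open>Z/(p-1)Z is represented by the residues {0..<p-1} of int, with
  addition modulo p-1.  chi(a/p^n) = a mod (p-1).\<close>
definition chi :: "nat \<Rightarrow> real \<Rightarrow> int" where
  "chi p x = (THE r. \<exists>(a::int) (n::nat). x = of_int a / real p ^ n \<and> r = a mod (int p - 1))"

definition Cp :: "nat \<Rightarrow> real set set" where
  "Cp p = {H. \<exists>l>0. H = (\<lambda>x. l * x) ` Hp p}"

definition scal :: "nat \<Rightarrow> real set \<Rightarrow> real" where
  "scal p H = (SOME l. l > 0 \<and> H = (\<lambda>x. l * x) ` Hp p)"

definition chiH :: "nat \<Rightarrow> real set \<Rightarrow> real \<Rightarrow> int" where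
  "chiH p H x = chi p (x / scal p H)"

definition supp :: "(real set \<Rightarrow> real) \<Rightarrow> real set set" where
  "supp D = {H. D H \<noteq> 0}"

definition Div :: "nat \<Rightarrow> (real set \<Rightarrow> real) set" where
  "Div p = {D. (\<forall>H\<in>Cp p. D H \<in> H) \<and> (\<forall>H. H \<notin> Cp p \<longrightarrow> D H = 0) \<and> finite (supp D)}"

definition deg :: "(real set \<Rightarrow> real) \<Rightarrow> real" where
  "deg D = (\<Sum>H\<in>supp D. D H)"

definition chiD :: "nat \<Rightarrow> (real set \<Rightarrow> real) \<Rightarrow> int" where
  "chiD p D = (\<Sum>H\<in>supp D. chiH p H (D H)) mod (int p - 1)"

definition piecewise_affine_Hp :: "nat \<Rightarrow> (real \<Rightarrow> real) \<Rightarrow> bool" where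
  "piecewise_affine_Hp p f \<longleftrightarrow>
     (\<forall>a b. 0 < a \<longrightarrow> a < b \<longrightarrow>
        (\<exists>ts::real list. sorted_wrt (<) ts \<and> length ts \<ge> 2 \<and> hd ts = a \<and> last ts = b \<and>
           (\<forall>i. Suc i < length ts \<longrightarrow>
              (\<exists>m\<in>Hp p. \<exists>c. \<forall>x\<in>{ts ! i .. ts ! Suc i}. f x = m * x + c))))"

definition K :: "nat \<Rightarrow> (real \<Rightarrow> real) set" where
  "K p = {f. continuous_on {0<..} f \<and> piecewise_affine_Hp p f \<and>
             (\<forall>x>0. f (real p * x) = f x)}"

definition Ord :: "nat \<Rightarrow> real set \<Rightarrow> (real \<Rightarrow> real) \<Rightarrow> real" where
  "Ord p H f = (let l = scal p H in
      Lim (at_right 0) (\<lambda>e. (f ((1 + e) * l) - f l) / e)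
    - Lim (at_left 0) (\<lambda>e. (f ((1 + e) * l) - f l) / e))"

definition principal :: "nat \<Rightarrow> (real \<Rightarrow> real) \<Rightarrow> (real set \<Rightarrow> real)" where
  "principal p f = (\<lambda>H. if H \<in> Cp p then Ord p H f else 0)"

definition Prin :: "nat \<Rightarrow> (real set \<Rightarrow> real) set" where
  "Prin p = principal p ` K p"

end

theory Submission
  imports Defs
begin

locale pr = fixes p :: nat assumes pp: "prime p"
begin

abbreviation "P \<equiv> real p"
abbreviation "m \<equiv> int p - 1"

lemma p2: "p \<ge> 2" using pp prime_ge_2_nat by blast
lemma P1: "P > 1" using p2 by simp
lemma Ppos: "P > 0" using p2 by simp
lemma mpos: "m > 0" using p2 by simp

lemma Hp_iff: "x \<in> Hp p \<longleftrightarrow> (\<exists>a n. x = of_int a / P ^ n)" by (auto simp: Hp_def)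

lemma Hp_int: "of_int a \<in> Hp p" unfolding Hp_iff by (rule exI[of _ a], rule exI[of _ 0]) simp

lemma Hp_0: "0 \<in> Hp p" using Hp_int[of 0] by simp
lemma Hp_1: "1 \<in> Hp p" using Hp_int[of 1] by simp

lemma Hp_add: assumes "x \<in> Hp p" "y \<in> Hp p" shows "x + y \<in> Hp p"
proof -
  obtain a n b k where x: "x = of_int a / P ^ n" and y: "y = of_int b / P ^ k" using assms Hp_iff by auto
  have "x + y = of_int (a * int p ^ k + b * int p ^ n) / P ^ (n + k)"
    using Ppos by (simp add: x y field_simps power_add)
  thus ?thesis unfolding Hp_iff by blast
qed

lemma Hp_mult: assumes "x \<in> Hp p" "y \<in> Hp p" shows "x * y \<in> Hp p"
proof -
  obtain a n b k where x: "x = of_int a / P ^ n" and y: "y = of_int b / P ^ k" using assms Hp_iff by auto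
  have "x * y = of_int (a * b) / P ^ (n + k)"
    using Ppos by (simp add: x y field_simps power_add)
  thus ?thesis unfolding Hp_iff by blast
qed

lemma Hp_uminus: assumes "x \<in> Hp p" shows "- x \<in> Hp p"
  using Hp_mult[OF Hp_int[of "-1"] assms] by simp

lemma Hp_diff: assumes "x \<in> Hp p" "y \<in> Hp p" shows "x - y \<in> Hp p"
  using Hp_add[OF assms(1) Hp_uminus[OF assms(2)]] by simp

lemma Hp_divP: assumes "x \<in> Hp p" shows "x / P \<in> Hp p"
proof -
  obtain a n where x: "x = of_int a / P ^ n" using assms Hp_iff by auto
  have "x / P = of_int a / P ^ Suc n" by (simp add: x)
  thus ?thesis unfolding Hp_iff by blast
qed

lemma Hp_P: "P \<in> Hp p" using Hp_int[of "int p"] by simp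

lemma Hp_sum: "finite A \<Longrightarrow> (\<And>i. i \<in> A \<Longrightarrow> f i \<in> Hp p) \<Longrightarrow> (\<Sum>i\<in>A. f i) \<in> Hp p"
  by (induction A rule: finite_induct) (auto intro: Hp_add Hp_0)

lemma Hp_multPn: "x \<in> Hp p \<Longrightarrow> x * P ^ n \<in> Hp p"
proof (induction n)
  case (Suc n) then show ?case using Hp_mult[OF Suc(1)[OF Suc(2)] Hp_P] by (simp add: algebra_simps)
qed simp
lemma Hp_divPn: "x \<in> Hp p \<Longrightarrow> x / P ^ n \<in> Hp p"
proof (induction n)
  case (Suc n) then show ?case using Hp_divP[OF Suc(1)[OF Suc(2)]] by (simp add: field_simps)
qed simp

definition pz :: "int \<Rightarrow> real" where "pz k = P powr of_int k"

lemma pz_pos: "pz k > 0" using Ppos by (simp add: pz_def)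
lemma pz_add: "pz (a + b) = pz a * pz b" using Ppos by (simp add: pz_def powr_add)
lemma pz_0: "pz 0 = 1" using Ppos by (simp add: pz_def)
lemma pz_1: "pz 1 = P" using Ppos by (simp add: pz_def)
lemma pz_minus: "pz (- k) = inverse (pz k)" using Ppos by (simp add: pz_def powr_minus)
lemma pz_nat: "pz (int n) = P ^ n" using Ppos by (simp add: pz_def powr_realpow)

lemma pz_cases: "pz k = (if k \<ge> 0 then P ^ nat k else inverse (P ^ nat (- k)))"
proof (cases "k \<ge> 0")
  case True then show ?thesis using pz_nat[of "nat k"] by simp
next
  case False then show ?thesis using pz_nat[of "nat (-k)"] pz_minus[of "-k"] by simp
qed

lemma Hp_mult_pz: assumes "x \<in> Hp p" shows "x * pz k \<in> Hp p"
  using Hp_multPn[OF assms] Hp_divPn[OF assms] by (auto simp: pz_cases divide_inverse)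

lemma Hp_div_pz: assumes "x \<in> Hp p" shows "x / pz k \<in> Hp p"
  using Hp_mult_pz[OF assms, of "-k"] by (simp add: pz_minus divide_inverse)

lemma Hp_pz: "pz k \<in> Hp p" using Hp_mult_pz[OF Hp_1] by simp

lemma pow_mod: "(int p ^ k) mod m = 1 mod m"
proof -
  have "int p mod m = 1 mod m" using p2
    by (metis add.commute diff_add_cancel mod_add_self2)
  hence "(int p ^ k) mod m = (1 ^ k) mod m" by (metis power_mod)
  thus ?thesis by simp
qed

lemma chi_eq: "chi p (of_int a / P ^ n) = a mod m"
  unfolding chi_def
proof (rule the_equality)
  fix r assume "\<exists>(a'::int) (n'::nat). of_int a / P ^ n = of_int a' / P ^ n' \<and> r = a' mod m"
  then obtain a' n' where e: "of_int a / P ^ n = of_int a' / P ^ n'" and r: "r = a' mod m" by blast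
  have "real_of_int (a * int p ^ n') = real_of_int (a' * int p ^ n)"
    using e Ppos by (simp add: field_simps)
  hence e2: "a * int p ^ n' = a' * int p ^ n" using of_int_eq_iff by blast
  have "a mod m = (a * int p ^ n') mod m" using pow_mod
    by (metis mod_mult_right_eq mult.right_neutral)
  also have "\<dots> = (a' * int p ^ n) mod m" using e2 by simp
  also have "\<dots> = a' mod m" using pow_mod
    by (metis mod_mult_right_eq mult.right_neutral)
  finally show "r = a mod m" using r by simp
qed blast

lemma chi_int: "chi p (of_int a) = a mod m" using chi_eq[of a 0] by simp
lemma chi_0: "chi p 0 = 0" using chi_int[of 0] by simp

lemma chi_add: assumes "x \<in> Hp p" "y \<in> Hp p" shows "chi p (x + y) = (chi p x + chi p y) mod m"
proof -
  obtain a n b k where x: "x = of_int a / P ^ n" and y: "y = of_int b / P ^ k" using assms Hp_iff by auto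
  have e: "x + y = of_int (a * int p ^ k + b * int p ^ n) / P ^ (n + k)"
    using Ppos by (simp add: x y field_simps power_add)
  have "chi p (x + y) = (a * int p ^ k + b * int p ^ n) mod m" unfolding e by (rule chi_eq)
  also have "\<dots> = (a + b) mod m" using pow_mod
    by (metis mod_add_cong mod_mult_right_eq mult.right_neutral)
  also have "\<dots> = (chi p x + chi p y) mod m" by (simp add: x y chi_eq mod_add_eq)
  finally show ?thesis .
qed

lemma chi_mult_int: assumes "x \<in> Hp p" shows "chi p (of_int c * x) = (c * chi p x) mod m"
proof -
  obtain a n where x: "x = of_int a / P ^ n" using assms Hp_iff by auto
  have e: "of_int c * x = of_int (c * a) / P ^ n" by (simp add: x)
  have "chi p (of_int c * x) = (c * a) mod m" unfolding e by (rule chi_eq)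
  thus ?thesis by (simp add: x chi_eq mod_mult_right_eq)
qed

lemma chi_uminus: assumes "x \<in> Hp p" shows "chi p (- x) = (- chi p x) mod m"
  using chi_mult_int[OF assms, of "-1"] by simp

lemma chi_diff: assumes "x \<in> Hp p" "y \<in> Hp p" shows "chi p (x - y) = (chi p x - chi p y) mod m"
  using chi_add[OF assms(1) Hp_uminus[OF assms(2)]] chi_uminus[OF assms(2)]
  by (simp add: mod_add_right_eq mod_diff_right_eq)
  


lemma chi_divPn: assumes "x \<in> Hp p" shows "chi p (x / P ^ k) = chi p x"
proof -
  obtain a n where x: "x = of_int a / P ^ n" using assms Hp_iff by auto
  have e: "x / P ^ k = of_int a / P ^ (n + k)" by (simp add: x power_add)
  have "chi p (x / P ^ k) = a mod m" unfolding e by (rule chi_eq)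
  thus ?thesis by (simp add: x chi_eq)
qed

lemma chi_multPn: assumes "x \<in> Hp p" shows "chi p (x * P ^ k) = chi p x"
proof -
  obtain a n where x: "x = of_int a / P ^ n" using assms Hp_iff by auto
  have e: "x * P ^ k = of_int (a * int p ^ k) / P ^ n" by (simp add: x)
  have "chi p (x * P ^ k) = (a * int p ^ k) mod m" unfolding e by (rule chi_eq)
  also have "\<dots> = a mod m" using pow_mod[of k] by (metis mod_mult_right_eq mult.right_neutral)
  finally show ?thesis by (simp add: x chi_eq)
qed

lemma chi_mult_pz: assumes "x \<in> Hp p" shows "chi p (x * pz k) = chi p x"
  using chi_multPn[OF assms] chi_divPn[OF assms] by (auto simp: pz_cases divide_inverse)

lemma chi_div_pz: assumes "x \<in> Hp p" shows "chi p (x / pz k) = chi p x"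
  using chi_mult_pz[OF assms, of "-k"] by (simp add: pz_minus divide_inverse)

lemma chi_sum: "finite A \<Longrightarrow> (\<And>i. i \<in> A \<Longrightarrow> f i \<in> Hp p) \<Longrightarrow>
   chi p (\<Sum>i\<in>A. f i) = (\<Sum>i\<in>A. chi p (f i)) mod m"
proof (induction A rule: finite_induct)
  case empty then show ?case by (simp add: chi_0)
next
  case (insert x F)
  have "chi p (\<Sum>i\<in>insert x F. f i) = chi p (f x + (\<Sum>i\<in>F. f i))" using insert by simp
  also have "\<dots> = (chi p (f x) + chi p (\<Sum>i\<in>F. f i)) mod m"
    by (rule chi_add) (auto intro!: Hp_sum insert)
  also have "\<dots> = (chi p (f x) + (\<Sum>i\<in>F. chi p (f i))) mod m" using insert by (simp add: mod_add_right_eq)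
  finally show ?case using insert by simp
qed

lemma chi_zero_div: assumes "x \<in> Hp p" "chi p x = 0" shows "x / (P - 1) \<in> Hp p"
proof -
  obtain a n where x: "x = of_int a / P ^ n" using assms Hp_iff by auto
  have "a mod m = 0" using assms by (simp add: x chi_eq)
  then obtain b where "a = m * b" by auto
  hence "real_of_int a = (P - 1) * of_int b" using p2 by simp
  hence "x / (P - 1) = (P - 1) * of_int b / P ^ n / (P - 1)" by (simp add: x)
  also have "\<dots> = of_int b / P ^ n" using P1 by simp
  finally have "x / (P - 1) = of_int b / P ^ n" .
  thus ?thesis unfolding Hp_iff by blast
qed

end

context pr begin

lemma pz_less_iff: "pz a < pz b \<longleftrightarrow> a < b" using P1 by (simp add: pz_def)
lemma pz_le_iff: "pz a \<le> pz b \<longleftrightarrow> a \<le> b" using P1 by (simp add: pz_def)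

definition lg :: "real \<Rightarrow> int" where "lg y = floor (log P y)"

lemma lg_bounds: assumes "y > 0" shows "pz (lg y) \<le> y" "y < pz (lg y + 1)"
proof -
  have e: "P powr log P y = y" using assms P1 by simp
  have "pz (lg y) \<le> P powr log P y" unfolding pz_def lg_def using P1
    by (intro powr_mono) auto
  thus "pz (lg y) \<le> y" using e by simp
  have "P powr log P y < pz (lg y + 1)" unfolding pz_def lg_def using P1
    by (intro powr_less_mono) linarith+
  thus "y < pz (lg y + 1)" using e by simp
qed

lemma lg_unique: assumes "pz k \<le> y" "y < pz (k + 1)" shows "lg y = k"
proof -
  have y: "y > 0" using assms pz_pos[of k] by linarith
  have "lg y \<le> k"
  proof (rule ccontr)
    assume "\<not> ?thesis" hence "k + 1 \<le> lg y" by simp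
    hence "pz (k+1) \<le> pz (lg y)" using pz_le_iff by blast
    thus False using lg_bounds[OF y] assms by linarith
  qed
  moreover have "k \<le> lg y"
  proof (rule ccontr)
    assume "\<not> ?thesis" hence "lg y + 1 \<le> k" by simp
    hence "pz (lg y + 1) \<le> pz k" using pz_le_iff by blast
    thus False using lg_bounds[OF y] assms by linarith
  qed
  ultimately show ?thesis by simp
qed

definition rd :: "real \<Rightarrow> real" where "rd y = y / pz (lg y)"

lemma rd_bounds: assumes "y > 0" shows "1 \<le> rd y" "rd y < P"
proof -
  have a: "pz (lg y) > 0" by (rule pz_pos)
  show "1 \<le> rd y" unfolding rd_def using lg_bounds(1)[OF assms] a by simp
  have "y < pz (lg y) * P" using lg_bounds(2)[OF assms] by (simp add: pz_add pz_1)
  thus "rd y < P" unfolding rd_def using a by (simp add: divide_less_eq mult.commute)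
qed

lemma rd_eq: "y = rd y * pz (lg y)" unfolding rd_def using pz_pos[of "lg y"] by simp

definition sc :: "real \<Rightarrow> real set" where "sc l = (\<lambda>x. l * x) ` Hp p"

lemma mem_sc: assumes "l > 0" shows "v \<in> sc l \<longleftrightarrow> v / l \<in> Hp p"
proof
  assume "v \<in> sc l" then obtain x where "x \<in> Hp p" "v = l * x" unfolding sc_def by blast
  thus "v / l \<in> Hp p" using assms by simp
next
  assume "v / l \<in> Hp p" moreover have "v = l * (v / l)" using assms by simp
  ultimately show "v \<in> sc l" unfolding sc_def by blast
qed

lemma sc_Cp: "l > 0 \<Longrightarrow> sc l \<in> Cp p" unfolding Cp_def sc_def by blast

lemma Cp_scal: assumes "H \<in> Cp p" shows "scal p H > 0" "H = sc (scal p H)"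
proof -
  have ex: "\<exists>l. l > 0 \<and> H = (\<lambda>x. l * x) ` Hp p" using assms unfolding Cp_def by blast
  have "scal p H > 0 \<and> H = (\<lambda>x. scal p H * x) ` Hp p"
    unfolding scal_def by (rule someI_ex[OF ex])
  thus "scal p H > 0" "H = sc (scal p H)" unfolding sc_def by auto
qed

lemma sc_mult_pz: assumes "l > 0" shows "sc (l * pz k) = sc l"
proof -
  have lp: "l * pz k > 0" using assms pz_pos by simp
  show ?thesis
  proof (rule set_eqI)
    fix v
    have "v / (l * pz k) = (v / l) / pz k" by simp
    thus "v \<in> sc (l * pz k) \<longleftrightarrow> v \<in> sc l"
      unfolding mem_sc[OF lp] mem_sc[OF assms]
      using Hp_div_pz[of "v/l" k] Hp_mult_pz[of "v / l / pz k" k] pz_pos[of k] by auto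
  qed
qed

lemma Hp_unit: assumes "q \<in> Hp p" "q > 0" "inverse q \<in> Hp p" shows "\<exists>j. q = pz j"
proof -
  obtain a n where a: "q = of_int a / P ^ n" using assms Hp_iff by auto
  obtain b k where b: "inverse q = of_int b / P ^ k" using assms Hp_iff by auto
  have apos: "a > 0" using assms(2) a Ppos by (simp add: zero_less_divide_iff)
  have a': "of_int a = q * P ^ n" using a Ppos by simp
  have b': "of_int b = inverse q * P ^ k" using b Ppos by simp
  have "of_int a * of_int b = (q * inverse q) * (P ^ n * P ^ k)" unfolding a' b' by (simp add: algebra_simps)
  hence "of_int a * of_int b = P ^ n * P ^ k" using assms(2) by simp
  hence "real_of_int (a * b) = real_of_int (int p ^ (n + k))" by (simp add: power_add)
  hence ab: "a * b = int p ^ (n + k)" using of_int_eq_iff by blast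
  have "nat a dvd p ^ (n + k)"
  proof -
    have "a dvd int p ^ (n + k)" using ab by (metis dvd_triv_left)
    hence "int (nat a) dvd int (p ^ (n + k))" using apos by simp
    thus ?thesis by (simp only: int_dvd_int_iff)
  qed
  then obtain i where "i \<le> n + k" "normalize (nat a) = p ^ i" using divides_primepow[OF pp] by metis
  hence ni: "nat a = p ^ i" by simp
  have "real_of_int a = real (nat a)" using apos by simp
  also have "\<dots> = P ^ i" using ni by simp
  finally have "real_of_int a = P ^ i" .
  moreover have "pz (int i - int n) = P ^ i * inverse (P ^ n)"
    using pz_add[of "int i" "- int n"] pz_minus[of "int n"] pz_nat by simp
  ultimately have "q = pz (int i - int n)" using a by (simp add: divide_inverse)
  thus ?thesis by blast
qed

lemma sc_inj: assumes "1 \<le> x" "x < P" "1 \<le> y" "y < P" "sc x = sc y" shows "x = y"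
proof -
  have x0: "x > 0" and y0: "y > 0" using assms by auto
  have "x \<in> sc x" unfolding mem_sc[OF x0] using x0 Hp_1 by simp
  hence q1: "x / y \<in> Hp p" using assms mem_sc[OF y0] by simp
  have "y \<in> sc y" unfolding mem_sc[OF y0] using y0 Hp_1 by simp
  hence q2: "y / x \<in> Hp p" using assms mem_sc[OF x0] by simp
  obtain j where j: "x / y = pz j" using Hp_unit[OF q1] q2 x0 y0 by auto
  have "P * 1 \<le> P * y" using assms(3) Ppos by (intro mult_left_mono) auto
  hence "x < P * y" using assms(2) by simp
  hence "x / y < P" using y0 by (simp add: divide_less_eq mult.commute)
  hence "j < 1" using j pz_less_iff[of j 1] pz_1 by simp
  moreover have "P * 1 \<le> P * x" using assms(1) Ppos by (intro mult_left_mono) auto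
  hence "y < P * x" using assms(4) by simp
  hence "y / P < x" using Ppos by (simp add: divide_less_eq mult.commute)
  hence "x / y > inverse P" using y0 Ppos by (simp add: field_simps)
  hence "-1 < j" using j pz_less_iff[of "-1" j] pz_1 pz_minus[of 1] by simp
  ultimately have "j = 0" by simp
  thus ?thesis using j pz_0 y0 by simp
qed

definition rep :: "real set \<Rightarrow> real" where "rep H = rd (scal p H)"

lemma rep_props: assumes "H \<in> Cp p"
  shows "1 \<le> rep H" "rep H < P" "sc (rep H) = H" "scal p H = rep H * pz (lg (scal p H))"
proof -
  note s = Cp_scal[OF assms]
  show "1 \<le> rep H" "rep H < P" unfolding rep_def using rd_bounds s by auto
  show e: "scal p H = rep H * pz (lg (scal p H))" unfolding rep_def by (rule rd_eq)
  have "rep H > 0" unfolding rep_def using rd_bounds(1)[OF s(1)] by linarith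
  thus "sc (rep H) = H" using s(2) e sc_mult_pz by metis
qed

lemma rep_sc: assumes "1 \<le> x" "x < P" shows "rep (sc x) = x"
proof -
  have c: "sc x \<in> Cp p" using assms sc_Cp by simp
  show ?thesis using sc_inj[OF rep_props(1,2)[OF c] assms rep_props(3)[OF c]] .
qed

end

context pr begin

definition periodic :: "(real \<Rightarrow> real) \<Rightarrow> bool" where
  "periodic f \<longleftrightarrow> (\<forall>x>0. f (P * x) = f x)"

lemma periodic_Pn: assumes "periodic f" "x > 0" shows "f (P ^ n * x) = f x"
proof (induction n)
  case (Suc n)
  have "f (P ^ Suc n * x) = f (P * (P ^ n * x))" by (simp add: algebra_simps)
  also have "\<dots> = f (P ^ n * x)" using assms Ppos unfolding periodic_def by simp
  finally show ?case using Suc by simp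
qed simp

lemma periodic_pz: assumes "periodic f" "x > 0" shows "f (pz k * x) = f x"
proof (cases "k \<ge> 0")
  case True then show ?thesis using periodic_Pn[OF assms] by (simp add: pz_cases)
next
  case False
  have x': "x / P ^ nat (-k) > 0" using assms Ppos by simp
  have "f (P ^ nat (-k) * (x / P ^ nat (-k))) = f (x / P ^ nat (-k))" by (rule periodic_Pn[OF assms(1) x'])
  then show ?thesis using False Ppos by (simp add: pz_cases field_simps)
qed

lemma local_scale: fixes f :: "real \<Rightarrow> real" assumes "periodic f" "0 < u" "\<forall>y\<in>{u..v}. f y = a * y + c"
  shows "\<forall>y\<in>{u * pz k .. v * pz k}. f y = (a / pz k) * y + c"
proof
  fix y assume y: "y \<in> {u * pz k .. v * pz k}"
  have pk: "pz k > 0" by (rule pz_pos)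
  have "y / pz k \<in> {u..v}" using y pk by (auto simp: field_simps)
  hence "f (y / pz k) = a * (y / pz k) + c" using assms by blast
  moreover have "f (pz (-k) * y) = f y" using assms(1) y pk assms(2)
    by (intro periodic_pz) (auto intro: order.strict_trans2 mult_pos_pos)
  ultimately show "f y = (a / pz k) * y + c" by (simp add: pz_minus field_simps)
qed

lemma quot_right: fixes f :: "real \<Rightarrow> real" assumes "x > 0" "d > 0" "\<forall>y\<in>{x..x+d}. f y = a * y + c"
  shows "((\<lambda>e. (f ((1+e)*x) - f x)/e) \<longlongrightarrow> a*x) (at_right 0)"
proof (rule tendsto_eventually)
  show "eventually (\<lambda>e. (f ((1+e)*x) - f x)/e = a*x) (at_right 0)"
  proof (rule eventually_at_rightI[of 0 "d/x"])
    show "0 < d / x" using assms by simp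
    fix e :: real assume "e \<in> {0<..<d/x}" hence e: "0 < e" "e < d / x" by auto
    have "e * x < d" using e assms(1) by (simp add: field_simps)
    hence "(1+e)*x \<in> {x..x+d}" using e assms(1) by (auto simp: algebra_simps)
    hence "f ((1+e)*x) = a * ((1+e)*x) + c" using assms by blast
    moreover have "f x = a * x + c" using assms by auto
    ultimately show "(f ((1+e)*x) - f x)/e = a*x" using e by (simp add: field_simps)
  qed
qed

lemma quot_left: fixes f :: "real \<Rightarrow> real" assumes "x > 0" "d > 0" "\<forall>y\<in>{x-d..x}. f y = a * y + c"
  shows "((\<lambda>e. (f ((1+e)*x) - f x)/e) \<longlongrightarrow> a*x) (at_left 0)"
proof (rule tendsto_eventually)
  show "eventually (\<lambda>e. (f ((1+e)*x) - f x)/e = a*x) (at_left 0)"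
  proof (rule eventually_at_leftI[of "-d/x" 0])
    show "- d / x < 0" using assms by simp
    fix e :: real assume "e \<in> {-d/x<..<0}" hence e: "- d / x < e" "e < 0" by auto
    have "- d < e * x" using e assms(1) by (simp add: field_simps)
    hence "(1+e)*x \<in> {x-d..x}" using e assms(1) by (auto simp: algebra_simps mult_nonpos_nonneg)
    hence "f ((1+e)*x) = a * ((1+e)*x) + c" using assms by blast
    moreover have "f x = a * x + c" using assms by auto
    ultimately show "(f ((1+e)*x) - f x)/e = a*x" using e by (simp add: field_simps)
  qed
qed

lemma Ord_local:
  assumes H: "H \<in> Cp p" and per: "periodic f" and d: "d > 0" and dr: "d < rep H"
    and R: "\<forall>y\<in>{rep H..rep H + d}. f y = aR * y + cR"
    and L: "\<forall>y\<in>{rep H - d..rep H}. f y = aL * y + cL"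
  shows "Ord p H f = rep H * (aR - aL)"
proof -
  define r where "r = rep H"
  define k where "k = lg (scal p H)"
  have l: "scal p H = r * pz k" unfolding r_def k_def by (rule rep_props(4)[OF H])
  have r0: "r > 0" using rep_props(1)[OF H] unfolding r_def by simp
  have pk: "pz k > 0" by (rule pz_pos)
  have R': "\<forall>y\<in>{r * pz k .. (r + d) * pz k}. f y = (aR / pz k) * y + cR"
    using local_scale[OF per _ R[folded r_def]] r0 by blast
  have L': "\<forall>y\<in>{(r - d) * pz k .. r * pz k}. f y = (aL / pz k) * y + cL"
    using local_scale[OF per _ L[folded r_def]] dr r_def by simp
  have R'': "\<forall>y\<in>{scal p H .. scal p H + d * pz k}. f y = (aR / pz k) * y + cR"
    using R' l by (simp add: algebra_simps)
  have L'': "\<forall>y\<in>{scal p H - d * pz k .. scal p H}. f y = (aL / pz k) * y + cL"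
    using L' l by (simp add: algebra_simps)
  have s0: "scal p H > 0" using Cp_scal[OF H] by simp
  have dk: "d * pz k > 0" using d pk by simp
  have "Lim (at_right 0) (\<lambda>e. (f ((1 + e) * scal p H) - f (scal p H)) / e) = aR / pz k * scal p H"
    by (rule tendsto_Lim[OF trivial_limit_at_right_real quot_right[OF s0 dk R'']])
  moreover have "Lim (at_left 0) (\<lambda>e. (f ((1 + e) * scal p H) - f (scal p H)) / e) = aL / pz k * scal p H"
    by (rule tendsto_Lim[OF trivial_limit_at_left_real quot_left[OF s0 dk L'']])
  ultimately have "Ord p H f = aR / pz k * scal p H - aL / pz k * scal p H"
    unfolding Ord_def Let_def by simp
  also have "\<dots> = r * (aR - aL)" using l pk by (simp add: field_simps)
  finally show ?thesis unfolding r_def .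
qed

end

locale kdata = pr +
  fixes f :: "real \<Rightarrow> real" and ts :: "real list" and sl ic :: "nat \<Rightarrow> real"
  assumes per: "periodic f"
    and srt: "sorted_wrt (<) ts" and len: "length ts \<ge> 2" and hd1: "hd ts = 1" and lastP: "last ts = P"
    and piece: "\<And>i. Suc i < length ts \<Longrightarrow> sl i \<in> Hp p \<and> (\<forall>x\<in>{ts!i..ts!Suc i}. f x = sl i * x + ic i)"
begin

abbreviation "n \<equiv> length ts - 1"
abbreviation "t i \<equiv> ts ! i"

lemma n1: "n \<ge> 1" using len by simp
lemma t0: "t 0 = 1" using hd1 len by (cases ts) auto
lemma tn: "t n = P"
proof -
  have "ts \<noteq> []" using len by auto
  thus ?thesis using last_conv_nth[of ts] lastP by simp
qed
lemma t_less: "i < j \<Longrightarrow> j \<le> n \<Longrightarrow> t i < t j"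
  using sorted_wrt_nth_less[OF srt, of i j] len by simp
lemma t_le: "i \<le> j \<Longrightarrow> j \<le> n \<Longrightarrow> t i \<le> t j"
  using t_less[of i j] by (cases "i = j") auto
lemma t_ge1: "i \<le> n \<Longrightarrow> 1 \<le> t i" using t_le[of 0 i] t0 by simp
lemma t_ltP: "i < n \<Longrightarrow> t i < P" using t_less[of i n] tn by simp
lemma t_inj: "i \<le> n \<Longrightarrow> j \<le> n \<Longrightarrow> t i = t j \<Longrightarrow> i = j"
  using t_less[of i j] t_less[of j i] by (cases "i < j"; cases "j < i") auto

lemma pc: "i < n \<Longrightarrow> sl i \<in> Hp p" "i < n \<Longrightarrow> y \<in> {t i..t (Suc i)} \<Longrightarrow> f y = sl i * y + ic i"
  using piece[of i] by auto

lemma find_piece: assumes "1 \<le> r" "r < P" shows "\<exists>i<n. t i \<le> r \<and> r < t (Suc i)"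
proof -
  define S where "S = {j. j < n \<and> t j \<le> r}"
  have fin: "finite S" unfolding S_def by simp
  have ne: "0 \<in> S" unfolding S_def using n1 t0 assms by simp
  define i where "i = Max S"
  have iS: "i \<in> S" unfolding i_def using fin ne Max_in by blast
  have "r < t (Suc i)"
  proof (cases "Suc i < n")
    case True
    have "Suc i \<notin> S" using Max_ge[OF fin, of "Suc i"] unfolding i_def by auto
    thus ?thesis using True unfolding S_def by simp
  next
    case False hence "Suc i = n" using iS unfolding S_def by simp
    thus ?thesis using tn assms by simp
  qed
  thus ?thesis using iS unfolding S_def by blast
qed

definition w :: "nat \<Rightarrow> real" where
  "w i = (if i = 0 then sl 0 - P * sl (n - 1) else t i * (sl i - sl (i - 1)))"

lemma ord_at_t: assumes H: "H \<in> Cp p" and i: "i < n" and r: "rep H = t i" shows "Ord p H f = w i"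
proof (cases "i = 0")
  case False
  have i1: "i - 1 < n" "Suc (i - 1) = i" using i False by auto
  define d where "d = min (t (Suc i) - t i) (t i - t (i - 1))"
  have d0: "d > 0" unfolding d_def using t_less[of i "Suc i"] t_less[of "i-1" i] i False by auto
  have "1 \<le> t (i - 1)" using t_ge1[of "i-1"] i by simp
  hence dr: "d < rep H" using r unfolding d_def by auto
  show ?thesis
  proof -
    have "Ord p H f = rep H * (sl i - sl (i - 1))"
    proof (rule Ord_local[OF H per d0 dr])
      show "\<forall>y\<in>{rep H..rep H + d}. f y = sl i * y + ic i"
        using pc(2)[OF i] r unfolding d_def by auto
      show "\<forall>y\<in>{rep H - d..rep H}. f y = sl (i-1) * y + ic (i-1)"
        using pc(2)[OF i1(1)] r i1(2) unfolding d_def by auto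
    qed
    thus ?thesis using False r unfolding w_def by simp
  qed
next
  case True
  have rH: "rep H = 1" using r True t0 by simp
  have nn: "n - 1 < n" "Suc (n - 1) = n" using n1 by auto
  have q: "t (n - 1) < P" using t_less[of "n-1" n] tn n1 by simp
  define d where "d = min (1/2) (min (t 1 - 1) (1 - t (n - 1) / P))"
  have d0: "d > 0" unfolding d_def using t_less[of 0 1] t0 n1 q Ppos by (auto simp: field_simps)
  have dr: "d < rep H" using rH unfolding d_def by auto
  have "Ord p H f = rep H * (sl 0 - P * sl (n - 1))"
  proof (rule Ord_local[OF H per d0 dr])
    show "\<forall>y\<in>{rep H..rep H + d}. f y = sl 0 * y + ic 0"
      using pc(2)[of 0] n1 rH t0 unfolding d_def by auto
    show "\<forall>y\<in>{rep H - d..rep H}. f y = (P * sl (n - 1)) * y + ic (n - 1)"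
    proof
      fix y assume y: "y \<in> {rep H - d..rep H}"
      have y0: "y > 0" using y rH unfolding d_def by auto
      have "t (n - 1) / P \<le> y" using y rH unfolding d_def by auto
      hence "t (n - 1) \<le> P * y" using Ppos by (simp add: field_simps)
      moreover have "P * y \<le> P" using y rH Ppos by auto
      ultimately have "P * y \<in> {t (n-1) .. t (Suc (n-1))}" using nn tn by simp
      hence "f (P * y) = sl (n-1) * (P * y) + ic (n-1)" using pc(2)[OF nn(1)] by blast
      moreover have "f (P * y) = f y" using per y0 unfolding periodic_def by blast
      ultimately show "f y = (P * sl (n - 1)) * y + ic (n - 1)" by simp
    qed
  qed
  thus ?thesis using True rH unfolding w_def by simp
qed

lemma ord_off: assumes H: "H \<in> Cp p" and r: "\<forall>i<n. rep H \<noteq> t i" shows "Ord p H f = 0"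
proof -
  obtain i where i: "i < n" "t i \<le> rep H" "rep H < t (Suc i)"
    using find_piece rep_props(1,2)[OF H] by blast
  have lt: "t i < rep H" using i r by force
  define d where "d = min (t (Suc i) - rep H) (rep H - t i)"
  have d0: "d > 0" unfolding d_def using lt i by auto
  have dr: "d < rep H" using t_ge1[of i] i unfolding d_def by auto
  have "Ord p H f = rep H * (sl i - sl i)"
  proof (rule Ord_local[OF H per d0 dr])
    show "\<forall>y\<in>{rep H..rep H + d}. f y = sl i * y + ic i"
      using pc(2)[OF i(1)] i unfolding d_def by auto
    show "\<forall>y\<in>{rep H - d..rep H}. f y = sl i * y + ic i"
      using pc(2)[OF i(1)] i unfolding d_def by auto
  qed
  thus ?thesis by simp
qed

definition u :: "nat \<Rightarrow> real" where
  "u i = (if i = 0 then sl 0 - P * sl (n - 1) else sl i - sl (i - 1))"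

lemma w_u: "i < n \<Longrightarrow> w i = t i * u i" unfolding w_def u_def using t0 by simp
lemma u_Hp: "i < n \<Longrightarrow> u i \<in> Hp p"
  unfolding u_def using pc(1)[of 0] pc(1)[of i] pc(1)[of "i - 1"] pc(1)[of "n-1"] n1
  by (auto intro!: Hp_diff Hp_mult Hp_P)

lemma sum_w: "(\<Sum>i<n. w i) = 0"
proof -
  have cont: "sl (i - 1) * t i + ic (i - 1) = sl i * t i + ic i" if "0 < i" "i < n" for i
  proof -
    have "Suc (i - 1) = i" using that by simp
    moreover have "t (i - 1) \<le> t i" using t_le[of "i-1" i] that by simp
    ultimately have "t i \<in> {t (i-1)..t (Suc (i-1))}" by simp
    hence "f (t i) = sl (i - 1) * t i + ic (i - 1)" using pc(2)[of "i-1" "t i"] that by auto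
    moreover have "f (t i) = sl i * t i + ic i" using pc(2)[of i "t i"] that t_less[of i "Suc i"] by auto
    ultimately show ?thesis by simp
  qed
  have wi: "w i = ic (i - 1) - ic i" if "0 < i" "i < n" for i
    using cont[OF that] that unfolding w_def by (simp add: algebra_simps)
  have "f P = f 1" using per Ppos unfolding periodic_def by (metis mult.right_neutral zero_less_one)
  moreover have "f 1 = sl 0 * 1 + ic 0" using pc(2)[of 0 1] n1 t0 t_less[of 0 1] by auto
  moreover have "f P = sl (n-1) * P + ic (n-1)"
  proof -
    have sn: "Suc (n - 1) = n" using n1 by simp
    have "n - 1 < n" using n1 by simp
    hence "t (n-1) \<le> P" using t_ltP[of "n-1"] by simp
    hence "P \<in> {t (n-1)..t (Suc (n-1))}" using sn tn by simp
    thus ?thesis using pc(2)[of "n-1" P] n1 by simp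
  qed
  ultimately have w0: "w 0 = ic (n - 1) - ic 0" unfolding w_def by (simp add: algebra_simps)
  obtain k where k: "n = Suc k" using n1 by (cases n) auto
  have "(\<Sum>i<n. w i) = w 0 + (\<Sum>i<k. w (Suc i))" unfolding k by (rule sum.lessThan_Suc_shift)
  also have "(\<Sum>i<k. w (Suc i)) = (\<Sum>i<k. ic i - ic (Suc i))"
  proof (rule sum.cong)
    fix x assume "x \<in> {..<k}"
    hence "0 < Suc x" "Suc x < n" using k by auto
    from wi[OF this] show "w (Suc x) = ic x - ic (Suc x)" by simp
  qed simp
  also have "\<dots> = ic 0 - ic k" by (rule sum_lessThan_telescope')
  finally have e: "(\<Sum>i<n. w i) = w 0 + (ic 0 - ic k)" .
  have "n - 1 = k" using k by simp
  hence "w 0 = ic k - ic 0" using w0 by simp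
  thus ?thesis using e by simp
qed

lemma sum_u: "(\<Sum>i<n. u i) = (1 - P) * sl (n - 1)"
proof -
  obtain k where k: "n = Suc k" using n1 by (cases n) auto
  have "(\<Sum>i<n. u i) = u 0 + (\<Sum>i<k. u (Suc i))" unfolding k by (rule sum.lessThan_Suc_shift)
  also have "(\<Sum>i<k. u (Suc i)) = (\<Sum>i<k. sl (Suc i) - sl i)"
    by (rule sum.cong) (auto simp: u_def)
  also have "\<dots> = sl k - sl 0" by (rule sum_lessThan_telescope)
  finally show ?thesis unfolding u_def k by (simp add: algebra_simps)
qed

lemma chi_sum_u: "chi p (\<Sum>i<n. u i) = 0"
proof -
  have s: "sl (n - 1) \<in> Hp p" using pc(1) n1 by simp
  have e: "(\<Sum>i<n. u i) = of_int (- m) * sl (n - 1)" unfolding sum_u by simp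
  have "chi p (\<Sum>i<n. u i) = chi p (of_int (- m) * sl (n - 1))" by (simp only: e)
  also have "\<dots> = (- m * chi p (sl (n - 1))) mod m" by (rule chi_mult_int[OF s])
  also have "\<dots> = 0" by (rule dvd_imp_mod_0) (metis dvd_minus_iff dvd_triv_left mult_minus_left)
  finally show ?thesis .
qed

end

context pr begin

lemma chiH_val: assumes H: "H \<in> Cp p" and v: "v / rep H \<in> Hp p" shows "chiH p H v = chi p (v / rep H)"
proof -
  obtain k where k: "scal p H = rep H * pz k" using rep_props(4)[OF H] by blast
  have e: "v / scal p H = (v / rep H) / pz k" unfolding k by simp
  have "chiH p H v = chi p ((v / rep H) / pz k)" unfolding chiH_def by (simp only: e)
  thus ?thesis using chi_div_pz[OF v] by simp
qed

lemma chiH_0: "chiH p H 0 = 0" unfolding chiH_def using chi_0 by simp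

lemma zero_in_Cp: "H \<in> Cp p \<Longrightarrow> 0 \<in> H"
  using Cp_scal[of H] mem_sc[of "scal p H" 0] Hp_0 by auto

end

context kdata begin

abbreviation "G \<equiv> (\<lambda>i. sc (t i)) ` {..<n}"

lemma t_range: "i < n \<Longrightarrow> 1 \<le> t i \<and> t i < P" using t_ge1[of i] t_ltP[of i] by simp

lemma sc_t_Cp: "i < n \<Longrightarrow> sc (t i) \<in> Cp p" using t_range[of i] sc_Cp by simp

lemma rep_sc_t: "i < n \<Longrightarrow> rep (sc (t i)) = t i" using t_range[of i] rep_sc by simp

lemma princ_t: "i < n \<Longrightarrow> principal p f (sc (t i)) = w i"
proof -
  assume i: "i < n"
  have "Ord p (sc (t i)) f = w i" by (rule ord_at_t[OF sc_t_Cp[OF i] i rep_sc_t[OF i]])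
  thus ?thesis unfolding principal_def using sc_t_Cp[OF i] by simp
qed

lemma princ_off: assumes "H \<notin> G" shows "principal p f H = 0"
proof (cases "H \<in> Cp p")
  case True
  have "\<forall>i<n. rep H \<noteq> t i"
  proof (intro allI impI notI)
    fix i assume i: "i < n" "rep H = t i"
    hence "H = sc (t i)" using rep_props(3)[OF True] by simp
    thus False using assms i by blast
  qed
  thus ?thesis unfolding principal_def using ord_off[OF True] True by simp
qed (simp add: principal_def)

lemma supp_sub: "supp (principal p f) \<subseteq> G" unfolding supp_def using princ_off by blast

lemma inj_G: "inj_on (\<lambda>i. sc (t i)) {..<n}"
proof (rule inj_onI)
  fix i j assume ij: "i \<in> {..<n}" "j \<in> {..<n}" and eq: "sc (t i) = sc (t j)"
  have i: "i < n" "j < n" using ij by auto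
  have "t i = rep (sc (t i))" using rep_sc_t[OF i(1)] by simp
  also have "\<dots> = rep (sc (t j))" using eq by simp
  also have "\<dots> = t j" using rep_sc_t[OF i(2)] .
  finally have "t i = t j" .
  moreover have "i \<le> n" "j \<le> n" using i by auto
  ultimately show "i = j" using t_inj by blast
qed

lemma princ_Div: "principal p f \<in> Div p"
  unfolding Div_def
proof (intro CollectI conjI ballI allI impI)
  fix H assume H: "H \<in> Cp p"
  show "principal p f H \<in> H"
  proof (cases "H \<in> G")
    case True
    then obtain i where i: "i < n" "H = sc (t i)" by blast
    have tp: "t i > 0" using t_range[OF i(1)] by simp
    have "w i / t i = u i" using w_u[OF i(1)] tp by simp
    hence "w i \<in> sc (t i)" using mem_sc[OF tp] u_Hp[OF i(1)] by simp
    thus ?thesis using princ_t[OF i(1)] i by simp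
  next
    case False thus ?thesis using princ_off zero_in_Cp[OF H] by simp
  qed
next
  fix H assume "H \<notin> Cp p" thus "principal p f H = 0" by (simp add: principal_def)
next
  show "finite (supp (principal p f))" using supp_sub finite_subset by blast
qed

lemma deg_princ: "deg (principal p f) = 0"
proof -
  have "deg (principal p f) = (\<Sum>H\<in>G. principal p f H)"
    unfolding deg_def
  proof (rule sum.mono_neutral_left)
    show "supp (principal p f) \<subseteq> G" by (rule supp_sub)
  qed (auto simp: supp_def)
  also have "\<dots> = (\<Sum>i<n. principal p f (sc (t i)))" by (rule sum.reindex[OF inj_G, unfolded comp_def])
  also have "\<dots> = (\<Sum>i<n. w i)" by (rule sum.cong) (auto simp: princ_t)
  finally show ?thesis using sum_w by simp
qed

lemma chi_princ: "chiD p (principal p f) = 0"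
proof -
  have "(\<Sum>H\<in>supp (principal p f). chiH p H (principal p f H)) = (\<Sum>H\<in>G. chiH p H (principal p f H))"
  proof (rule sum.mono_neutral_left)
    show "supp (principal p f) \<subseteq> G" by (rule supp_sub)
  qed (auto simp: supp_def chiH_0)
  also have "\<dots> = (\<Sum>i<n. chiH p (sc (t i)) (principal p f (sc (t i))))"
    by (rule sum.reindex[OF inj_G, unfolded comp_def])
  also have "\<dots> = (\<Sum>i<n. chi p (u i))"
  proof (rule sum.cong)
    fix i assume "i \<in> {..<n}" hence i: "i < n" by simp
    have tp: "t i > 0" using t_range[OF i] by simp
    have e: "w i / t i = u i" using w_u[OF i] tp by simp
    show "chiH p (sc (t i)) (principal p f (sc (t i))) = chi p (u i)"
      using chiH_val[OF sc_t_Cp[OF i]] princ_t[OF i] rep_sc_t[OF i] e u_Hp[OF i] by simp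
  qed simp
  finally have "chiD p (principal p f) = (\<Sum>i<n. chi p (u i)) mod m" unfolding chiD_def by simp
  also have "\<dots> = chi p (\<Sum>i<n. u i)" by (rule chi_sum[symmetric]) (auto simp: u_Hp)
  finally show ?thesis using chi_sum_u by simp
qed

end

context pr begin

lemma PA_crit:
  assumes H: "\<And>a b. 0 < a \<Longrightarrow> a < b \<Longrightarrow> \<exists>Z. finite Z \<and> (\<forall>u v. a \<le> u \<longrightarrow> u < v \<longrightarrow> v \<le> b \<longrightarrow>
      (\<forall>z\<in>Z. \<not> (u < z \<and> z < v)) \<longrightarrow> (\<exists>mm\<in>Hp p. \<exists>c. \<forall>x\<in>{u..v}. f x = mm * x + c))"
  shows "piecewise_affine_Hp p f"
  unfolding piecewise_affine_Hp_def
proof (intro allI impI)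
  fix a b :: real assume ab: "0 < a" "a < b"
  obtain Z where Z: "finite Z" and ZH: "\<forall>u v. a \<le> u \<longrightarrow> u < v \<longrightarrow> v \<le> b \<longrightarrow>
      (\<forall>z\<in>Z. \<not> (u < z \<and> z < v)) \<longrightarrow> (\<exists>mm\<in>Hp p. \<exists>c. \<forall>x\<in>{u..v}. f x = mm * x + c)"
    using H[OF ab] by blast
  define A where "A = {a, b} \<union> {z\<in>Z. a < z \<and> z < b}"
  have finA: "finite A" unfolding A_def using Z by simp
  have Ab: "\<And>y. y \<in> A \<Longrightarrow> a \<le> y \<and> y \<le> b" unfolding A_def using ab by auto
  define ts where "ts = sorted_list_of_set A"
  have st: "sorted_wrt (<) ts" unfolding ts_def by simp
  have so: "sorted ts" unfolding ts_def by simp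
  have setts: "set ts = A" unfolding ts_def using finA by simp
  have dist: "distinct ts" unfolding ts_def by simp
  have "card A \<ge> 2"
  proof -
    have "{a, b} \<subseteq> A" unfolding A_def by auto
    hence "card {a, b} \<le> card A" using finA card_mono by blast
    thus ?thesis using ab by simp
  qed
  hence len: "length ts \<ge> 2" using distinct_card[OF dist] setts by simp
  have ne: "ts \<noteq> []" using len by auto
  have Ane: "A \<noteq> {}" unfolding A_def by simp
  have "hd ts = Min A" unfolding ts_def sorted_list_of_set_nonempty[OF finA Ane] by simp
  moreover have "Min A = a" by (rule Min_eqI[OF finA]) (auto simp: Ab A_def)
  ultimately have hd: "hd ts = a" by simp
  have last: "last ts = b"
  proof -
    have lA: "last ts \<in> A" using last_in_set[OF ne] setts by simp
    have "b \<in> set ts" using setts unfolding A_def by simp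
    then obtain j where j: "j < length ts" "ts ! j = b" by (meson in_set_conv_nth)
    have "ts ! j \<le> ts ! (length ts - 1)" using sorted_nth_mono[OF so, of j "length ts - 1"] j by simp
    hence "b \<le> last ts" using j last_conv_nth[OF ne] by simp
    thus ?thesis using Ab[OF lA] by simp
  qed
  show "\<exists>ts. sorted_wrt (<) ts \<and> length ts \<ge> 2 \<and> hd ts = a \<and> last ts = b \<and>
           (\<forall>i. Suc i < length ts \<longrightarrow> (\<exists>mm\<in>Hp p. \<exists>c. \<forall>x\<in>{ts ! i .. ts ! Suc i}. f x = mm * x + c))"
  proof (intro exI[of _ ts] conjI allI impI)
    fix i assume i: "Suc i < length ts"
    have uA: "ts ! i \<in> A" "ts ! Suc i \<in> A" using i setts nth_mem by (metis Suc_lessD) (use i setts nth_mem in metis)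
    have uv: "ts ! i < ts ! Suc i" using sorted_wrt_nth_less[OF st, of i "Suc i"] i by simp
    have noz: "\<forall>z\<in>Z. \<not> (ts ! i < z \<and> z < ts ! Suc i)"
    proof (intro ballI notI)
      fix z assume z: "z \<in> Z" "ts ! i < z \<and> z < ts ! Suc i"
      have "z \<in> A" unfolding A_def using z Ab[OF uA(1)] Ab[OF uA(2)] by auto
      then obtain j where j: "j < length ts" "ts ! j = z" using setts by (metis in_set_conv_nth)
      show False
      proof (cases "j \<le> i")
        case True thus False using sorted_nth_mono[OF so True] i j z by simp
      next
        case False hence "Suc i \<le> j" by simp
        thus False using sorted_nth_mono[OF so, of "Suc i" j] j z by simp
      qed
    qed
    show "\<exists>mm\<in>Hp p. \<exists>c. \<forall>x\<in>{ts ! i .. ts ! Suc i}. f x = mm * x + c"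
      using ZH Ab[OF uA(1)] Ab[OF uA(2)] uv noz by blast
  qed (use st len hd last in auto)
qed

lemma gap_right: fixes X :: "real set" shows "finite X \<Longrightarrow> \<exists>d>0. \<forall>z\<in>X. \<not> (r < z \<and> z < r + d)"
proof (induction X rule: finite_induct)
  case empty show ?case by (rule exI[of _ 1]) simp
next
  case (insert x F)
  then obtain d where d: "d > 0" "\<forall>z\<in>F. \<not> (r < z \<and> z < r + d)" by blast
  show ?case
  proof (cases "r < x")
    case True thus ?thesis using d by (intro exI[of _ "min d (x - r)"]) auto
  next
    case False thus ?thesis using d by (intro exI[of _ d]) auto
  qed
qed

lemma gap_left: fixes X :: "real set" shows "finite X \<Longrightarrow> \<exists>d>0. \<forall>z\<in>X. \<not> (r - d < z \<and> z < r)"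
proof (induction X rule: finite_induct)
  case empty show ?case by (rule exI[of _ 1]) simp
next
  case (insert x F)
  then obtain d where d: "d > 0" "\<forall>z\<in>F. \<not> (r - d < z \<and> z < r)" by blast
  show ?case
  proof (cases "x < r")
    case True thus ?thesis using d by (intro exI[of _ "min d (r - x)"]) auto
  next
    case False thus ?thesis using d by (intro exI[of _ d]) auto
  qed
qed

lemma hinge: fixes X :: "real set" and c :: "real \<Rightarrow> real" assumes X: "finite X" and noz: "\<forall>z\<in>X. \<not> (u < z \<and> z < v)" and y: "y \<in> {u..v}"
  shows "(\<Sum>z\<in>X. c z * max 0 (y - z)) = (\<Sum>z\<in>{z\<in>X. z \<le> u}. c z) * y - (\<Sum>z\<in>{z\<in>X. z \<le> u}. c z * z)"
proof -
  have "(\<Sum>z\<in>X. c z * max 0 (y - z)) = (\<Sum>z\<in>X. if z \<le> u then c z * (y - z) else 0)"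
  proof (rule sum.cong)
    fix z assume z: "z \<in> X"
    show "c z * max 0 (y - z) = (if z \<le> u then c z * (y - z) else 0)"
    proof (cases "z \<le> u")
      case True thus ?thesis using y by auto
    next
      case False hence "v \<le> z" using noz z by force
      thus ?thesis using y False by auto
    qed
  qed simp
  also have "\<dots> = (\<Sum>z\<in>{z\<in>X. z \<le> u}. c z * (y - z))" using X by (simp add: sum.inter_filter)
  also have "\<dots> = (\<Sum>z\<in>{z\<in>X. z \<le> u}. c z) * y - (\<Sum>z\<in>{z\<in>X. z \<le> u}. c z * z)"
    by (simp add: sum_distrib_left sum_distrib_right sum_subtractf algebra_simps)
  finally show ?thesis .
qed

end

locale cdata = pr +
  fixes D :: "real set \<Rightarrow> real"
  assumes DDiv: "D \<in> Div p" and deg0: "deg D = 0" and chi0: "chiD p D = 0"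
begin

abbreviation "S \<equiv> supp D"
definition "X = insert 1 (rep ` S)"
definition "J x = D (sc x)"
definition "Ssum = (\<Sum>z\<in>X - {1}. J z / z)"
definition "m0 = - (J 1 + P * Ssum) / (P - 1)"
definition "cc z = (if z = 1 then m0 else J z / z)"
definition "g y = (\<Sum>z\<in>X. cc z * max 0 (y - z))"
definition "Fn y = g (rd y)"

lemma finS: "finite S" using DDiv unfolding Div_def by simp
lemma S_Cp: "H \<in> S \<Longrightarrow> H \<in> Cp p" using DDiv unfolding Div_def supp_def by auto
lemma D_mem: "H \<in> Cp p \<Longrightarrow> D H \<in> H" using DDiv unfolding Div_def by auto
lemma D_off: "H \<notin> Cp p \<Longrightarrow> D H = 0" using DDiv unfolding Div_def by auto

lemma finX: "finite X" unfolding X_def using finS by simp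
lemma X_range: "z \<in> X \<Longrightarrow> 1 \<le> z \<and> z < P"
  unfolding X_def using P1 rep_props(1,2)[OF S_Cp] by auto
lemma S_sub: "H \<in> S \<Longrightarrow> rep H \<in> X" unfolding X_def by auto

lemma J_Hp: assumes "z \<in> X" shows "J z / z \<in> Hp p"
proof -
  have z: "1 \<le> z" "z < P" using X_range[OF assms] by auto
  have c: "sc z \<in> Cp p" using sc_Cp z by simp
  have "J z \<in> sc z" unfolding J_def by (rule D_mem[OF c])
  thus ?thesis using mem_sc[of z] z by simp
qed

lemma inj_sc: "inj_on sc X"
proof (rule inj_onI)
  fix x y assume "x \<in> X" "y \<in> X" "sc x = sc y"
  thus "x = y" using sc_inj X_range by blast
qed

lemma S_sub_scX: "S \<subseteq> sc ` X"
proof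
  fix H assume H: "H \<in> S"
  have "H = sc (rep H)" using rep_props(3)[OF S_Cp[OF H]] by simp
  thus "H \<in> sc ` X" using S_sub[OF H] by blast
qed

lemma sum_J: "(\<Sum>z\<in>X. J z) = deg D"
proof -
  have "deg D = (\<Sum>H\<in>sc ` X. D H)"
    unfolding deg_def
  proof (rule sum.mono_neutral_left)
    show "S \<subseteq> sc ` X" by (rule S_sub_scX)
  qed (auto simp: finX supp_def)
  also have "\<dots> = (\<Sum>z\<in>X. D (sc z))" by (rule sum.reindex[OF inj_sc, unfolded comp_def])
  finally show ?thesis unfolding J_def by simp
qed

lemma sum_chi: "(\<Sum>z\<in>X. chi p (J z / z)) mod m = chiD p D"
proof -
  have "(\<Sum>H\<in>S. chiH p H (D H)) = (\<Sum>H\<in>sc ` X. chiH p H (D H))"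
  proof (rule sum.mono_neutral_left)
    show "S \<subseteq> sc ` X" by (rule S_sub_scX)
  qed (auto simp: finX supp_def chiH_0)
  also have "\<dots> = (\<Sum>z\<in>X. chiH p (sc z) (D (sc z)))" by (rule sum.reindex[OF inj_sc, unfolded comp_def])
  also have "\<dots> = (\<Sum>z\<in>X. chi p (J z / z))"
  proof (rule sum.cong)
    fix z assume z: "z \<in> X"
    have r: "1 \<le> z" "z < P" using X_range[OF z] by auto
    have c: "sc z \<in> Cp p" using sc_Cp r by simp
    show "chiH p (sc z) (D (sc z)) = chi p (J z / z)"
      using chiH_val[OF c, of "J z"] rep_sc[OF r] J_Hp[OF z] unfolding J_def by simp
  qed simp
  finally show ?thesis unfolding chiD_def by simp
qed

lemma cc_Hp: "z \<in> X \<Longrightarrow> cc z \<in> Hp p \<Longrightarrow> True" by simp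

lemma Ssum_Hp: "Ssum \<in> Hp p" unfolding Ssum_def using J_Hp by (intro Hp_sum) (auto simp: finX)

lemma one_X: "1 \<in> X" unfolding X_def by simp

lemma sumX_split: "(\<Sum>z\<in>X. h z) = h 1 + (\<Sum>z\<in>X - {1}. h z)" for h :: "real \<Rightarrow> 'a::comm_monoid_add"
  using sum.remove[OF finX one_X] by simp

lemma m0_Hp: "m0 \<in> Hp p"
proof -
  have J1: "J 1 \<in> Hp p" using J_Hp[OF one_X] by simp
  have q: "J 1 + P * Ssum \<in> Hp p" using J1 Ssum_Hp Hp_P by (intro Hp_add Hp_mult)
  have "chi p (J 1 + P * Ssum) = (chi p (J 1) + chi p (P * Ssum)) mod m"
    using J1 Ssum_Hp Hp_P by (intro chi_add Hp_mult)
  also have "chi p (P * Ssum) = chi p Ssum" using chi_multPn[OF Ssum_Hp, of 1] by (simp add: mult.commute)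
  also have "(chi p (J 1) + chi p Ssum) mod m = chi p (J 1 + Ssum)"
    using chi_add[OF J1 Ssum_Hp] by simp
  also have "J 1 + Ssum = (\<Sum>z\<in>X. J z / z)" unfolding Ssum_def using sumX_split[of "\<lambda>z. J z / z"] by simp
  also have "chi p \<dots> = (\<Sum>z\<in>X. chi p (J z / z)) mod m" using J_Hp by (intro chi_sum finX) auto
  also have "\<dots> = 0" using sum_chi chi0 by simp
  finally have "chi p (J 1 + P * Ssum) = 0" .
  hence "(J 1 + P * Ssum) / (P - 1) \<in> Hp p" using chi_zero_div q by blast
  moreover have "m0 = - ((J 1 + P * Ssum) / (P - 1))" unfolding m0_def by (simp add: minus_divide_left)
  ultimately show ?thesis using Hp_uminus by simp
qed

lemma cc_Hp': "z \<in> X \<Longrightarrow> cc z \<in> Hp p" unfolding cc_def using m0_Hp J_Hp by auto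

lemma g1: "g 1 = 0" unfolding g_def using X_range by (intro sum.neutral) auto

lemma gP: "g P = 0"
proof -
  have "g P = (\<Sum>z\<in>X. cc z * (P - z))" unfolding g_def using X_range by (intro sum.cong) auto
  also have "\<dots> = cc 1 * (P - 1) + (\<Sum>z\<in>X - {1}. cc z * (P - z))" by (rule sumX_split)
  also have "(\<Sum>z\<in>X - {1}. cc z * (P - z)) = (\<Sum>z\<in>X - {1}. P * (J z / z) - J z)"
  proof (rule sum.cong)
    fix z assume z: "z \<in> X - {1}"
    have "z > 0" "z \<noteq> 1" using X_range[of z] z by auto
    thus "cc z * (P - z) = P * (J z / z) - J z" by (simp add: cc_def field_simps)
  qed simp
  also have "\<dots> = P * Ssum - (\<Sum>z\<in>X - {1}. J z)" unfolding Ssum_def by (simp add: sum_subtractf sum_distrib_left)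
  also have "cc 1 * (P - 1) = - (J 1 + P * Ssum)" unfolding cc_def m0_def using P1 by simp
  finally have "g P = - (J 1 + (\<Sum>z\<in>X - {1}. J z))" by simp
  also have "J 1 + (\<Sum>z\<in>X - {1}. J z) = (\<Sum>z\<in>X. J z)" using sumX_split[of J] by simp
  finally show ?thesis using sum_J deg0 by simp
qed

end

context pr begin
lemma lg_mono: assumes "0 < a" "a \<le> u" shows "lg a \<le> lg u"
  unfolding lg_def using assms P1 by (intro floor_mono) simp
end

context cdata begin

lemma Fn_piece: assumes y: "y \<in> {pz k .. pz (k+1)}" shows "Fn y = g (y / pz k)"
proof (cases "y < pz (k+1)")
  case True
  have "lg y = k" using lg_unique y True by simp
  thus ?thesis unfolding Fn_def rd_def by simp
next
  case False
  hence y': "y = pz (k+1)" using y by simp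
  have "lg y = k + 1" using lg_unique[of "k+1" y] y' pz_less_iff[of "k+1" "k+1+1"] by simp
  hence "rd y = 1" unfolding rd_def using y' pz_pos[of "k+1"] by simp
  moreover have "y / pz k = P" using y' pz_add[of k 1] pz_1 pz_pos[of k] by simp
  ultimately show ?thesis unfolding Fn_def using g1 gP by simp
qed

lemma Fn_per: "periodic Fn"
  unfolding periodic_def
proof (intro allI impI)
  fix y :: real assume y: "y > 0"
  have b1: "pz (lg y + 1) \<le> P * y" using lg_bounds(1)[OF y] pz_add[of "lg y" 1] pz_1 Ppos by simp
  have b2: "P * y < pz (lg y + 1 + 1)" using lg_bounds(2)[OF y] pz_add[of "lg y + 1" 1] pz_1 Ppos by simp
  have "lg (P * y) = lg y + 1" using lg_unique[OF b1 b2] .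
  hence "rd (P * y) = rd y" unfolding rd_def using pz_add[of "lg y" 1] pz_1 Ppos by simp
  thus "Fn (P * y) = Fn y" unfolding Fn_def by simp
qed

lemma g_cont: "continuous_on A g" unfolding g_def by (intro continuous_intros)

lemma cont_piece: "continuous_on {pz k .. pz (k+1)} Fn"
proof -
  have "continuous_on {pz k .. pz (k+1)} (\<lambda>y. g (y / pz k))"
    by (rule continuous_on_compose2[OF g_cont[of UNIV]]) (use pz_pos[of k] in \<open>auto intro!: continuous_intros\<close>)
    thus ?thesis using continuous_on_cong[of "{pz k .. pz (k+1)}" "{pz k .. pz (k+1)}" Fn "\<lambda>y. g (y / pz k)"] Fn_piece by blast
qed

lemma Fn_cont: "continuous_on {0<..} Fn"
proof (rule continuous_at_imp_continuous_on, intro ballI)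
  fix y :: real assume "y \<in> {0<..}" hence y: "y > 0" by simp
  define k where "k = lg y"
  have c: "continuous_on ({pz (k - 1) .. pz (k - 1 + 1)} \<union> {pz k .. pz (k+1)}) Fn"
    by (intro continuous_on_closed_Un cont_piece) auto
  have "continuous_on {pz (k - 1) <..< pz (k+1)} Fn"
    by (rule continuous_on_subset[OF c]) auto
  moreover have "y \<in> {pz (k - 1) <..< pz (k+1)}"
    using lg_bounds[OF y] pz_less_iff[of "k - 1" k] unfolding k_def by auto
  ultimately show "isCont Fn y" using continuous_on_eq_continuous_at[of "{pz (k - 1) <..< pz (k+1)}" Fn] open_greaterThanLessThan by auto
qed

lemma A_Hp: "(\<Sum>z\<in>{z\<in>X. z \<le> u}. cc z) \<in> Hp p" using cc_Hp' finX by (intro Hp_sum) auto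

lemma Fn_pw: "piecewise_affine_Hp p Fn"
proof (rule PA_crit)
  fix a b :: real assume ab: "0 < a" "a < b"
  define Z where "Z = (\<lambda>(z, k). z * pz k) ` (X \<times> {lg a .. lg b + 1})"
  have "finite Z" unfolding Z_def using finX by simp
  moreover have "\<forall>u v. a \<le> u \<longrightarrow> u < v \<longrightarrow> v \<le> b \<longrightarrow> (\<forall>z\<in>Z. \<not> (u < z \<and> z < v)) \<longrightarrow>
      (\<exists>mm\<in>Hp p. \<exists>c. \<forall>x\<in>{u..v}. Fn x = mm * x + c)"
  proof (intro allI impI)
    fix u v assume uv: "a \<le> u" "u < v" "v \<le> b" and noz: "\<forall>z\<in>Z. \<not> (u < z \<and> z < v)"
    have u0: "u > 0" using ab uv by simp
    define k where "k = lg u"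
    have k1: "lg a \<le> k" unfolding k_def using lg_mono ab uv by simp
    have k2: "k \<le> lg b" unfolding k_def using lg_mono[of u b] u0 uv by simp
    have pk: "pz k > 0" by (rule pz_pos)
    have "pz (k + 1) \<in> Z" unfolding Z_def using one_X k1 k2
      by (intro image_eqI[of _ _ "(1, k+1)"]) auto
    hence "v \<le> pz (k+1)" using noz lg_bounds(2)[OF u0] unfolding k_def by force
    hence sub: "{u..v} \<subseteq> {pz k .. pz (k+1)}" using lg_bounds(1)[OF u0] unfolding k_def by auto
    have noz': "\<forall>z\<in>X. \<not> (u / pz k < z \<and> z < v / pz k)"
    proof (intro ballI notI)
      fix z assume z: "z \<in> X" "u / pz k < z \<and> z < v / pz k"
      have "z * pz k \<in> Z" unfolding Z_def using z(1) k1 k2 by (intro image_eqI[of _ _ "(z, k)"]) auto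
      moreover have "u < z * pz k" "z * pz k < v" using z(2) pk by (auto simp: field_simps)
      ultimately show False using noz by blast
    qed
    define A where "A = (\<Sum>z\<in>{z\<in>X. z \<le> u / pz k}. cc z)"
    define B where "B = (\<Sum>z\<in>{z\<in>X. z \<le> u / pz k}. cc z * z)"
    have "\<forall>x\<in>{u..v}. Fn x = (A / pz k) * x + (- B)"
    proof
      fix x assume x: "x \<in> {u..v}"
      have "Fn x = g (x / pz k)" using Fn_piece sub x by blast
      also have "\<dots> = A * (x / pz k) - B" unfolding g_def A_def B_def
        by (rule hinge[OF finX noz']) (use x pk in \<open>auto simp: divide_right_mono\<close>)
      finally show "Fn x = (A / pz k) * x + (- B)" by simp
    qed
    moreover have "A / pz k \<in> Hp p" unfolding A_def using A_Hp by (rule Hp_div_pz)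
    ultimately show "\<exists>mm\<in>Hp p. \<exists>c. \<forall>x\<in>{u..v}. Fn x = mm * x + c" by blast
  qed
  ultimately show "\<exists>Z. finite Z \<and> (\<forall>u v. a \<le> u \<longrightarrow> u < v \<longrightarrow> v \<le> b \<longrightarrow> (\<forall>z\<in>Z. \<not> (u < z \<and> z < v)) \<longrightarrow>
      (\<exists>mm\<in>Hp p. \<exists>c. \<forall>x\<in>{u..v}. Fn x = mm * x + c))" by blast
qed

lemma Fn_eq_g: "y \<in> {1..P} \<Longrightarrow> Fn y = g y" using Fn_piece[of y 0] pz_0 pz_1 by simp

end

context cdata begin

lemma right_side: assumes r: "1 \<le> r" "r < P"
  shows "\<exists>d>0. \<exists>c. \<forall>y\<in>{r..r+d}. Fn y = (\<Sum>z\<in>{z\<in>X. z \<le> r}. cc z) * y + c"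
proof -
  obtain d1 where d1: "d1 > 0" "\<forall>z\<in>X. \<not> (r < z \<and> z < r + d1)" using gap_right[OF finX] by blast
  define d where "d = min d1 (P - r)"
  have d: "d > 0" unfolding d_def using d1 r by simp
  have noz: "\<forall>z\<in>X. \<not> (r < z \<and> z < r + d)" using d1 unfolding d_def by force
  have "\<forall>y\<in>{r..r+d}. Fn y = (\<Sum>z\<in>{z\<in>X. z \<le> r}. cc z) * y + (- (\<Sum>z\<in>{z\<in>X. z \<le> r}. cc z * z))"
  proof
    fix y assume y: "y \<in> {r..r+d}"
    have "y \<in> {1..P}" using y r unfolding d_def by auto
    hence "Fn y = g y" by (rule Fn_eq_g)
    also have "\<dots> = (\<Sum>z\<in>{z\<in>X. z \<le> r}. cc z) * y - (\<Sum>z\<in>{z\<in>X. z \<le> r}. cc z * z)"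
      unfolding g_def by (rule hinge[OF finX noz y])
    finally show "Fn y = (\<Sum>z\<in>{z\<in>X. z \<le> r}. cc z) * y + (- (\<Sum>z\<in>{z\<in>X. z \<le> r}. cc z * z))" by simp
  qed
  thus ?thesis using d by blast
qed

lemma left_side: assumes r: "1 < r" "r < P"
  shows "\<exists>d>0. \<exists>c. \<forall>y\<in>{r-d..r}. Fn y = (\<Sum>z\<in>{z\<in>X. z < r}. cc z) * y + c"
proof -
  obtain d1 where d1: "d1 > 0" "\<forall>z\<in>X. \<not> (r - d1 < z \<and> z < r)" using gap_left[OF finX] by blast
  define d where "d = min d1 (r - 1)"
  have d: "d > 0" unfolding d_def using d1 r by simp
  have noz: "\<forall>z\<in>X. \<not> (r - d < z \<and> z < r)" using d1 unfolding d_def by force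
  have eqs: "{z\<in>X. z \<le> r - d} = {z\<in>X. z < r}" using noz d by force
  have "\<forall>y\<in>{r-d..r}. Fn y = (\<Sum>z\<in>{z\<in>X. z < r}. cc z) * y + (- (\<Sum>z\<in>{z\<in>X. z \<le> r - d}. cc z * z))"
  proof
    fix y assume y: "y \<in> {r-d..r}"
    have "y \<in> {1..P}" using y r unfolding d_def by auto
    hence "Fn y = g y" by (rule Fn_eq_g)
    also have "\<dots> = (\<Sum>z\<in>{z\<in>X. z \<le> r - d}. cc z) * y - (\<Sum>z\<in>{z\<in>X. z \<le> r - d}. cc z * z)"
      unfolding g_def by (rule hinge[OF finX _ y]) (use noz in simp)
    finally show "Fn y = (\<Sum>z\<in>{z\<in>X. z < r}. cc z) * y + (- (\<Sum>z\<in>{z\<in>X. z \<le> r - d}. cc z * z))"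
      using eqs by simp
  qed
  thus ?thesis using d by blast
qed

lemma left_side1:
  shows "\<exists>d>0. \<exists>c. \<forall>y\<in>{1-d..1}. Fn y = (P * (\<Sum>z\<in>X. cc z)) * y + c"
proof -
  obtain d1 where d1: "d1 > 0" "\<forall>z\<in>X. \<not> (P - d1 < z \<and> z < P)" using gap_left[OF finX] by blast
  define d where "d = min d1 (P - 1)"
  have d: "d > 0" unfolding d_def using d1 P1 by simp
  have noz: "\<forall>z\<in>X. \<not> (P - d < z \<and> z < P)" using d1 unfolding d_def by force
  have eqs: "{z\<in>X. z \<le> P - d} = X" using noz d X_range by force
  define c where "c = - (\<Sum>z\<in>{z\<in>X. z \<le> P - d}. cc z * z)"
  have "\<forall>y\<in>{1 - d / P..1}. Fn y = (P * (\<Sum>z\<in>X. cc z)) * y + c"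
  proof
    fix y assume y: "y \<in> {1 - d / P..1}"
    have dP: "d / P \<le> 1 - 1 / P" using Ppos unfolding d_def by (simp add: field_simps)
    have "pz (-1) = 1 / P" using pz_minus[of 1] pz_1 by (simp add: divide_inverse)
    hence "y \<in> {pz (-1) .. pz (-1 + 1)}" using y dP pz_0 by auto
    hence "Fn y = g (y / pz (-1))" by (rule Fn_piece)
    also have "y / pz (-1) = P * y" using \<open>pz (-1) = 1 / P\<close> by simp
    also have "P * y \<in> {P - d .. P}" using y Ppos by (auto simp: field_simps)
    hence "g (P * y) = (\<Sum>z\<in>{z\<in>X. z \<le> P - d}. cc z) * (P * y) - (\<Sum>z\<in>{z\<in>X. z \<le> P - d}. cc z * z)"
      unfolding g_def by (rule hinge[OF finX noz])
    finally show "Fn y = (P * (\<Sum>z\<in>X. cc z)) * y + c" unfolding c_def eqs by simp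
  qed
  moreover have "d / P > 0" using d Ppos by simp
  ultimately show ?thesis by blast
qed

lemma Ord_Fn: assumes H: "H \<in> Cp p" shows "Ord p H Fn = D H"
proof -
  define r where "r = rep H"
  have r: "1 \<le> r" "r < P" using rep_props(1,2)[OF H] unfolding r_def by auto
  have Hr: "H = sc r" using rep_props(3)[OF H] unfolding r_def by simp
  obtain dR cR where dR: "dR > 0" "\<forall>y\<in>{r..r+dR}. Fn y = (\<Sum>z\<in>{z\<in>X. z \<le> r}. cc z) * y + cR"
    using right_side[OF r] by blast
  show ?thesis
  proof (cases "r = 1")
    case False
    hence r1: "1 < r" using r by simp
    obtain dL cL where dL: "dL > 0" "\<forall>y\<in>{r-dL..r}. Fn y = (\<Sum>z\<in>{z\<in>X. z < r}. cc z) * y + cL"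
      using left_side[OF r1 r(2)] by blast
    define d where "d = min (min dR dL) (r / 2)"
    have d: "d > 0" "d < rep H" using dR dL r unfolding d_def r_def by auto
    have "Ord p H Fn = rep H * ((\<Sum>z\<in>{z\<in>X. z \<le> r}. cc z) - (\<Sum>z\<in>{z\<in>X. z < r}. cc z))"
    proof (rule Ord_local[OF H Fn_per d])
      show "\<forall>y\<in>{rep H..rep H + d}. Fn y = (\<Sum>z\<in>{z\<in>X. z \<le> r}. cc z) * y + cR"
        using dR unfolding d_def r_def by auto
      show "\<forall>y\<in>{rep H - d..rep H}. Fn y = (\<Sum>z\<in>{z\<in>X. z < r}. cc z) * y + cL"
        using dL unfolding d_def r_def by auto
    qed
    also have "(\<Sum>z\<in>{z\<in>X. z \<le> r}. cc z) - (\<Sum>z\<in>{z\<in>X. z < r}. cc z) = (if r \<in> X then cc r else 0)"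
    proof (cases "r \<in> X")
      case True
      have "{z\<in>X. z \<le> r} = insert r {z\<in>X. z < r}" using True by auto
      thus ?thesis using True finX by simp
    next
      case False
      have "{z\<in>X. z \<le> r} = {z\<in>X. z < r}" using False by (auto simp: order_le_less)
      thus ?thesis using False by simp
    qed
    also have "rep H * (if r \<in> X then cc r else 0) = D H"
    proof (cases "r \<in> X")
      case True
      have "rep H * cc r = J r" using False r unfolding r_def cc_def by simp
      thus ?thesis using True Hr unfolding J_def r_def by simp
    next
      case False
      hence "H \<notin> S" using S_sub unfolding r_def by blast
      thus ?thesis using False unfolding supp_def by simp
    qed
    finally show ?thesis .
  next
    case True
    obtain dL cL where dL: "dL > 0" "\<forall>y\<in>{1-dL..1}. Fn y = (P * (\<Sum>z\<in>X. cc z)) * y + cL"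
      using left_side1 by blast
    define d where "d = min (min dR dL) (1 / 2)"
    have d: "d > 0" "d < rep H" using dR dL True unfolding d_def r_def by auto
    have "Ord p H Fn = rep H * ((\<Sum>z\<in>{z\<in>X. z \<le> r}. cc z) - P * (\<Sum>z\<in>X. cc z))"
    proof (rule Ord_local[OF H Fn_per d])
      show "\<forall>y\<in>{rep H..rep H + d}. Fn y = (\<Sum>z\<in>{z\<in>X. z \<le> r}. cc z) * y + cR"
        using dR unfolding d_def r_def by auto
      show "\<forall>y\<in>{rep H - d..rep H}. Fn y = (P * (\<Sum>z\<in>X. cc z)) * y + cL"
        using dL True unfolding d_def r_def by auto
    qed
    also have "{z\<in>X. z \<le> r} = {1}" using True X_range one_X by force
    also have "(\<Sum>z\<in>X. cc z) = cc 1 + (\<Sum>z\<in>X - {1}. cc z)" by (rule sumX_split)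
    also have "(\<Sum>z\<in>X - {1}. cc z) = Ssum" unfolding Ssum_def cc_def by (rule sum.cong) auto
    finally have "Ord p H Fn = m0 - P * (m0 + Ssum)" using True unfolding r_def cc_def by simp
    also have "\<dots> = J 1"
    proof -
      have e: "m0 * (P - 1) = - (J 1 + P * Ssum)" unfolding m0_def using P1 by simp
      have "m0 - P * (m0 + Ssum) = - (m0 * (P - 1)) - P * Ssum" by (simp add: algebra_simps)
      thus ?thesis unfolding e by simp
    qed
    finally show ?thesis using Hr True unfolding J_def by simp
  qed
qed

lemma princ_Fn: "principal p Fn = D"
proof
  fix H show "principal p Fn H = D H"
    unfolding principal_def using Ord_Fn D_off by auto
qed

lemma Fn_K: "Fn \<in> K p"
  unfolding K_def using Fn_cont Fn_pw Fn_per unfolding periodic_def by simp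

end

context pr begin

lemma K_props: assumes f: "f \<in> K p"
  shows "principal p f \<in> Div p \<and> deg (principal p f) = 0 \<and> chiD p (principal p f) = 0"
proof -
  have per: "periodic f" using f unfolding K_def periodic_def by simp
  have pw: "piecewise_affine_Hp p f" using f unfolding K_def by simp
  obtain ts where ts: "sorted_wrt (<) ts" "length ts \<ge> 2" "hd ts = 1" "last ts = P"
    "\<forall>i. Suc i < length ts \<longrightarrow> (\<exists>mm\<in>Hp p. \<exists>c. \<forall>x\<in>{ts ! i .. ts ! Suc i}. f x = mm * x + c)"
    using pw P1 unfolding piecewise_affine_Hp_def by (metis zero_less_one)
  have "\<forall>i. \<exists>mc. Suc i < length ts \<longrightarrow> fst mc \<in> Hp p \<and> (\<forall>x\<in>{ts ! i .. ts ! Suc i}. f x = fst mc * x + snd mc)"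
    using ts(5) by fastforce
  then obtain F where F: "\<And>i. Suc i < length ts \<Longrightarrow> fst (F i) \<in> Hp p \<and> (\<forall>x\<in>{ts ! i .. ts ! Suc i}. f x = fst (F i) * x + snd (F i))"
    by metis
  interpret kd: kdata p f ts "\<lambda>i. fst (F i)" "\<lambda>i. snd (F i)"
    by unfold_locales (use per ts F in auto)
  show ?thesis using kd.princ_Div kd.deg_princ kd.chi_princ by simp
qed

lemma sc_diff: assumes "l > 0" "x \<in> sc l" "y \<in> sc l" shows "x - y \<in> sc l"
  using assms mem_sc[OF assms(1)] Hp_diff[of "x / l" "y / l"] by (simp add: diff_divide_distrib)

lemma sc_add: assumes "l > 0" "x \<in> sc l" "y \<in> sc l" shows "x + y \<in> sc l"
  using assms mem_sc[OF assms(1)] Hp_add[of "x / l" "y / l"] by (simp add: add_divide_distrib)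

lemma chiH_sc: assumes l: "l > 0" and v: "v / l \<in> Hp p" shows "chiH p (sc l) v = chi p (v / l)"
proof -
  have r: "1 \<le> rd l" "rd l < P" using rd_bounds[OF l] by auto
  have e: "sc l = sc (rd l)" using sc_mult_pz[of "rd l" "lg l"] rd_eq[of l] r by simp
  have rr: "rep (sc l) = rd l" unfolding e by (rule rep_sc[OF r])
  have v': "v / rd l = (v / l) * pz (lg l)" using rd_eq[of l] pz_pos[of "lg l"] r
    by (metis (no_types, lifting) divide_divide_eq_right mult.commute nonzero_mult_div_cancel_left
        order_less_irrefl pz_pos times_divide_eq_left)
  have "v / rd l \<in> Hp p" unfolding v' using v by (rule Hp_mult_pz)
  hence "chiH p (sc l) v = chi p (v / rd l)" using chiH_val[OF sc_Cp[OF l]] rr by simp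
  also have "\<dots> = chi p (v / l)" unfolding v' by (rule chi_mult_pz[OF v])
  finally show ?thesis .
qed

definition dsub :: "(real set \<Rightarrow> real) \<Rightarrow> (real set \<Rightarrow> real) \<Rightarrow> (real set \<Rightarrow> real)" where
  "dsub D E = (\<lambda>H. D H - E H)"

lemma Div_props: assumes "D \<in> Div p"
  shows "\<And>H. H \<in> Cp p \<Longrightarrow> D H \<in> H" "\<And>H. H \<notin> Cp p \<Longrightarrow> D H = 0" "finite (supp D)"
  using assms unfolding Div_def by auto

lemma sub_Div: assumes D: "D \<in> Div p" and E: "E \<in> Div p"
  shows "(\<lambda>H. D H - E H) \<in> Div p"
    and "deg (\<lambda>H. D H - E H) = deg D - deg E"
    and "chiD p (\<lambda>H. D H - E H) = (\<Sum>H\<in>supp D \<union> supp E. chiH p H (D H) - chiH p H (E H)) mod m"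
proof -
  note d = Div_props[OF D] and e = Div_props[OF E]
  define U where "U = supp D \<union> supp E"
  have fU: "finite U" unfolding U_def using d(3) e(3) by simp
  have sF: "supp (\<lambda>H. D H - E H) \<subseteq> U" unfolding U_def supp_def by auto
  show "(\<lambda>H. D H - E H) \<in> Div p"
    unfolding Div_def
  proof (intro CollectI conjI ballI allI impI)
    fix H assume H: "H \<in> Cp p"
    have "D H - E H \<in> sc (scal p H)" using sc_diff[OF Cp_scal(1)[OF H]] d(1)[OF H] e(1)[OF H] Cp_scal(2)[OF H] by simp
    thus "D H - E H \<in> H" using Cp_scal(2)[OF H] by simp
  next
    fix H assume "H \<notin> Cp p" thus "D H - E H = 0" using d(2) e(2) by simp
  next
    show "finite (supp (\<lambda>H. D H - E H))" using sF fU finite_subset by blast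
  qed
  have sD: "deg D = (\<Sum>H\<in>U. D H)" unfolding deg_def
  proof (rule sum.mono_neutral_left)
    show "finite U" by (rule fU)
  qed (auto simp: U_def supp_def)
  have sE: "deg E = (\<Sum>H\<in>U. E H)" unfolding deg_def
  proof (rule sum.mono_neutral_left)
    show "finite U" by (rule fU)
  qed (auto simp: U_def supp_def)
  have "deg (\<lambda>H. D H - E H) = (\<Sum>H\<in>U. D H - E H)" unfolding deg_def
    by (rule sum.mono_neutral_left) (use fU sF in \<open>auto simp: supp_def\<close>)
  thus "deg (\<lambda>H. D H - E H) = deg D - deg E" using sD sE by (simp add: sum_subtractf)
  have "(\<Sum>H\<in>supp (\<lambda>H. D H - E H). chiH p H (D H - E H)) = (\<Sum>H\<in>U. chiH p H (D H - E H))"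
    by (rule sum.mono_neutral_left) (use fU sF in \<open>auto simp: supp_def chiH_0\<close>)
  also have "\<dots> = (\<Sum>H\<in>U. (chiH p H (D H) - chiH p H (E H)) mod m)"
  proof (rule sum.cong)
    fix H assume "H \<in> U"
    show "chiH p H (D H - E H) = (chiH p H (D H) - chiH p H (E H)) mod m"
    proof (cases "H \<in> Cp p")
      case True
      have l: "scal p H > 0" using Cp_scal[OF True] by simp
      have a: "D H / scal p H \<in> Hp p" using d(1)[OF True] Cp_scal(2)[OF True] mem_sc[OF l] by simp
      have b: "E H / scal p H \<in> Hp p" using e(1)[OF True] Cp_scal(2)[OF True] mem_sc[OF l] by simp
      show ?thesis unfolding chiH_def using chi_diff[OF a b] by (simp add: diff_divide_distrib)
    next
      case False thus ?thesis using d(2) e(2) by (simp add: chiH_0)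
    qed
  qed simp
  finally show "chiD p (\<lambda>H. D H - E H) = (\<Sum>H\<in>supp D \<union> supp E. chiH p H (D H) - chiH p H (E H)) mod m"
    unfolding chiD_def U_def by (simp add: mod_sum_eq)
qed

lemma chi_rel: assumes D: "D \<in> Div p" and E: "E \<in> Div p"
  shows "chiD p (\<lambda>H. D H - E H) = 0 \<longleftrightarrow> chiD p D = chiD p E"
proof -
  note d = Div_props[OF D] and e = Div_props[OF E]
  define U where "U = supp D \<union> supp E"
  have fU: "finite U" unfolding U_def using d(3) e(3) by simp
  have sD: "(\<Sum>H\<in>supp D. chiH p H (D H)) = (\<Sum>H\<in>U. chiH p H (D H))"
  proof (rule sum.mono_neutral_left)
    show "finite U" by (rule fU)
  qed (auto simp: U_def supp_def chiH_0)
  have sE: "(\<Sum>H\<in>supp E. chiH p H (E H)) = (\<Sum>H\<in>U. chiH p H (E H))"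
  proof (rule sum.mono_neutral_left)
    show "finite U" by (rule fU)
  qed (auto simp: U_def supp_def chiH_0)
  have "chiD p (\<lambda>H. D H - E H) = ((\<Sum>H\<in>U. chiH p H (D H)) - (\<Sum>H\<in>U. chiH p H (E H))) mod m"
    using sub_Div(3)[OF D E] unfolding U_def by (simp add: sum_subtractf)
  moreover have "chiD p D = (\<Sum>H\<in>U. chiH p H (D H)) mod m" unfolding chiD_def sD ..
  moreover have "chiD p E = (\<Sum>H\<in>U. chiH p H (E H)) mod m" unfolding chiD_def sE ..
  ultimately show ?thesis by (simp add: mod_eq_dvd_iff dvd_eq_mod_eq_0)
qed

definition pt2 :: "real \<Rightarrow> real \<Rightarrow> real \<Rightarrow> real \<Rightarrow> real set \<Rightarrow> real" where
  "pt2 l1 x l2 y = (\<lambda>H. (if H = sc l1 then x else 0) + (if H = sc l2 then y else 0))"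

lemma pt2_props: assumes l1: "l1 > 0" and l2: "l2 > 0" and x: "x / l1 \<in> Hp p" and y: "y / l2 \<in> Hp p"
  shows "pt2 l1 x l2 y \<in> Div p" "deg (pt2 l1 x l2 y) = x + y"
    "chiD p (pt2 l1 x l2 y) = (chi p (x / l1) + chi p (y / l2)) mod m"
proof -
  define D where "D = pt2 l1 x l2 y"
  have x': "x \<in> sc l1" using mem_sc[OF l1] x by simp
  have y': "y \<in> sc l2" using mem_sc[OF l2] y by simp
  have c1: "sc l1 \<in> Cp p" and c2: "sc l2 \<in> Cp p" using sc_Cp l1 l2 by auto
  have sD: "supp D \<subseteq> {sc l1, sc l2}" unfolding D_def pt2_def supp_def by auto
  show "D \<in> Div p" unfolding Div_def
  proof (intro CollectI conjI ballI allI impI)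
    fix H assume H: "H \<in> Cp p"
    show "D H \<in> H"
    proof (cases "H = sc l1")
      case True
      show ?thesis
      proof (cases "sc l1 = sc l2")
        case True2: True
        have "y \<in> sc l1" using y' True2 by simp
        thus ?thesis unfolding D_def pt2_def using True True2 sc_add[OF l1 x'] by simp
      next
        case False thus ?thesis unfolding D_def pt2_def using True x' by simp
      qed
    next
      case False
      show ?thesis
      proof (cases "H = sc l2")
        case True thus ?thesis unfolding D_def pt2_def using False y' by simp
      next
        case False2: False thus ?thesis unfolding D_def pt2_def using False zero_in_Cp[OF H] by simp
      qed
    qed
  next
    fix H assume "H \<notin> Cp p" thus "D H = 0" unfolding D_def pt2_def using c1 c2 by auto
  next
    show "finite (supp D)" using sD finite_subset by blast
  qed
  have degs: "deg D = (\<Sum>H\<in>{sc l1, sc l2}. D H)" unfolding deg_def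
    by (rule sum.mono_neutral_left) (use sD in \<open>auto simp: supp_def\<close>)
  have chis: "chiD p D = (\<Sum>H\<in>{sc l1, sc l2}. chiH p H (D H)) mod m" unfolding chiD_def
    by (rule arg_cong[where f = "\<lambda>s. s mod m"], rule sum.mono_neutral_left) (use sD in \<open>auto simp: supp_def chiH_0\<close>)
  show "deg D = x + y"
  proof (cases "sc l1 = sc l2")
    case True thus ?thesis using degs unfolding D_def pt2_def by simp
  next
    case False thus ?thesis using degs unfolding D_def pt2_def by simp
  qed
  have h1: "chiH p (sc l1) x = chi p (x / l1)" by (rule chiH_sc[OF l1 x])
  have h2: "chiH p (sc l2) y = chi p (y / l2)" by (rule chiH_sc[OF l2 y])
  show "chiD p D = (chi p (x / l1) + chi p (y / l2)) mod m"
  proof (cases "sc l1 = sc l2")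
    case True
    have y1: "y / l1 \<in> Hp p" using y' True mem_sc[OF l1] by simp
    have "chiH p (sc l1) (x + y) = chi p ((x + y) / l1)" using Hp_add[OF x y1]
      by (intro chiH_sc[OF l1]) (simp add: add_divide_distrib)
    also have "\<dots> = (chi p (x / l1) + chi p (y / l1)) mod m" using chi_add[OF x y1] by (simp add: add_divide_distrib)
    also have "chi p (y / l1) = chiH p (sc l1) y" by (rule chiH_sc[OF l1 y1, symmetric])
    also have "\<dots> = chi p (y / l2)" using True h2 by simp
    finally show ?thesis using chis True unfolding D_def pt2_def by simp
  next
    case False
    have "D (sc l1) = x" "D (sc l2) = y" unfolding D_def pt2_def using False by auto
    thus ?thesis using chis False h1 h2 by (simp add: mod_add_eq)
  qed
qed

lemma surj: assumes c: "c \<in> {0..<m}" shows "\<exists>D\<in>Div p. deg D = r \<and> chiD p D = c"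
proof -
  define y where "y = r - of_int c"
  define l2 where "l2 = (if y = 0 then 1 else \<bar>y\<bar> / (P - 1))"
  have l2: "l2 > 0" unfolding l2_def using P1 by simp
  have yl: "y / l2 = (if y = 0 then 0 else sgn y * (P - 1))"
  proof (cases "y = 0")
    case False
    hence "y / l2 = y * (P - 1) / \<bar>y\<bar>" unfolding l2_def by simp
    also have "\<dots> = sgn y * (P - 1)" using False by (simp add: sgn_if)
    finally show ?thesis using False by simp
  qed (simp add: l2_def)
  have ye: "y / l2 = of_int (if y = 0 then 0 else if y > 0 then m else - m)" unfolding yl using P1
    by (auto simp: sgn_if)
  have yH: "y / l2 \<in> Hp p" unfolding ye by (rule Hp_int)
  have mm0: "(- m) mod m = 0" by (rule dvd_imp_mod_0) (metis dvd_minus_iff dvd_refl)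
  have cy: "chi p (y / l2) = 0" unfolding ye chi_int using mm0 by auto
  have x: "of_int c / 1 \<in> Hp p" using Hp_int by simp
  have props: "pt2 1 (of_int c) l2 y \<in> Div p" "deg (pt2 1 (of_int c) l2 y) = of_int c + y"
    "chiD p (pt2 1 (of_int c) l2 y) = (chi p (of_int c / 1) + chi p (y / l2)) mod m"
    using pt2_props[OF _ l2 x yH] by auto
  have "chiD p (pt2 1 (of_int c) l2 y) = c" using props(3) cy c by (simp add: chi_int)
  moreover have "deg (pt2 1 (of_int c) l2 y) = r" using props(2) unfolding y_def by simp
  ultimately show ?thesis using props(1) by blast
qed

end



theorem theorem5p6:
  fixes p :: nat
  assumes "prime p"
  shows "Prin p \<subseteq> Div p
    \<and> (\<forall>D\<in>Prin p. deg D = 0 \<and> chiD p D = 0)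
    \<and> (\<forall>D\<in>Div p. \<forall>E\<in>Div p.
          (deg D = deg E \<and> chiD p D = chiD p E) \<longleftrightarrow> (\<lambda>H. D H - E H) \<in> Prin p)
    \<and> (\<forall>r::real. \<forall>c\<in>{0..<int p - 1}. \<exists>D\<in>Div p. deg D = r \<and> chiD p D = c)"
proof -
  interpret pr p using assms by unfold_locales
  have c1: "Prin p \<subseteq> Div p" unfolding Prin_def using K_props by auto
  have c2: "\<forall>D\<in>Prin p. deg D = 0 \<and> chiD p D = 0" unfolding Prin_def using K_props by auto
  have c3: "\<forall>D\<in>Div p. \<forall>E\<in>Div p.
          (deg D = deg E \<and> chiD p D = chiD p E) \<longleftrightarrow> (\<lambda>H. D H - E H) \<in> Prin p"
  proof (intro ballI iffI)
    fix D E assume D: "D \<in> Div p" and E: "E \<in> Div p"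
    {
      assume a: "deg D = deg E \<and> chiD p D = chiD p E"
      have d0: "deg (\<lambda>H. D H - E H) = 0" using sub_Div(2)[OF D E] a by simp
      have c0: "chiD p (\<lambda>H. D H - E H) = 0" using chi_rel[OF D E] a by simp
      interpret cd: cdata p "\<lambda>H. D H - E H"
        by unfold_locales (use sub_Div(1)[OF D E] d0 c0 in auto)
      show "(\<lambda>H. D H - E H) \<in> Prin p" unfolding Prin_def using cd.princ_Fn cd.Fn_K
        by (metis image_eqI)
    }
    {
      assume "(\<lambda>H. D H - E H) \<in> Prin p"
      hence "deg (\<lambda>H. D H - E H) = 0 \<and> chiD p (\<lambda>H. D H - E H) = 0" using c2 by blast
      thus "deg D = deg E \<and> chiD p D = chiD p E" using sub_Div(2)[OF D E] chi_rel[OF D E] by simp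
    }
  qed
  have c4: "\<forall>r::real. \<forall>c\<in>{0..<int p - 1}. \<exists>D\<in>Div p. deg D = r \<and> chiD p D = c"
    using surj by blast
  show ?thesis using c1 c2 c3 c4 by blast
qed

end
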